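(* Let $\mu$ be the Möbius function of the Butcher--Connes--Kreimer Hopf algebra of rooted forests (the convolution inverse of $\zeta\equiv 1$ in its dual algebra). Then for every finite rooted forest $F$, \[ \mu(F)=\begin{cases}(-1)^n & \text{if $F$ consists of $n$ isolated root nodes (i.e. $n$ one-node trees)},\\ 0&\text{otherwise.}\end{cases} \]
   Context: Rooted forests are finite (possibly empty) disjoint unions of finite rooted trees (trees given by their nodes, each non-root node having a parent). The Butcher--Connes--Kreimer Hopf algebra is spanned by isomorphism classes of rooted forests with comultiplication $\Delta(F)=\sum_c P^c(F)\otimes R^c(F)$ over admissible cuts, where $P^c(F)$ is the pruned part and $R^c(F)$ the trunk; equivalently, the sum runs over subsets $U$ of nodes of $F$ closed under taking children, with $P^c(F)=U$ and $R^c(F)=F\setminus U$ carrying the induced forest structures. The dual algebra consists of functions $\varphi$ on isomorphism classes of rooted forests with convolution $(\varphi*\psi)(F)=\sum_{U}\varphi(U)\psi(F\setminus U)$ and unit $\delta(F)=1$ iff $F$ is empty. The zeta function is $\zeta\equiv1$ and the Möbius function is its convolution inverse. *)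

theory Defs
  imports Main
begin

text \<open>A finite rooted forest is given by a finite node set V (nodes are naturals)
  and a parent map; roots have no parent.  Nodes outside V carry no parent.\<close>

type_synonym forest = "nat set \<times> (nat \<Rightarrow> nat option)"

definition nodes :: "forest \<Rightarrow> nat set" where "nodes F = fst F"
definition par :: "forest \<Rightarrow> nat \<Rightarrow> nat option" where "par F = snd F"

definition parent_rel :: "forest \<Rightarrow> (nat \<times> nat) set" where
  "parent_rel F = {(v, p). par F v = Some p}"

definition wf_forest :: "forest \<Rightarrow> bool" where
  "wf_forest F \<longleftrightarrow> finite (nodes F)
     \<and> (\<forall>v. par F v \<noteq> None \<longrightarrow> v \<in> nodes F)
     \<and> (\<forall>v p. par F v = Some p \<longrightarrow> p \<in> nodes F)
     \<and> acyclic (parent_rel F)"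

definition forest_iso :: "forest \<Rightarrow> forest \<Rightarrow> bool" where
  "forest_iso F G \<longleftrightarrow> (\<exists>f. bij_betw f (nodes F) (nodes G)
      \<and> (\<forall>v\<in>nodes F. par G (f v) = map_option f (par F v)))"

text \<open>Subsets of nodes closed under taking children (admissible cuts: pruned parts).\<close>
definition child_closed :: "forest \<Rightarrow> nat set \<Rightarrow> bool" where
  "child_closed F U \<longleftrightarrow> U \<subseteq> nodes F
     \<and> (\<forall>x\<in>U. \<forall>y\<in>nodes F. par F y = Some x \<longrightarrow> y \<in> U)"

definition induced :: "forest \<Rightarrow> nat set \<Rightarrow> forest" where
  "induced F U = (U, \<lambda>v. if v \<in> U then
        (case par F v of Some p \<Rightarrow> if p \<in> U then Some p else None | None \<Rightarrow> None)
      else None)"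

definition conv :: "(forest \<Rightarrow> 'r::comm_ring_1) \<Rightarrow> (forest \<Rightarrow> 'r) \<Rightarrow> forest \<Rightarrow> 'r" where
  "conv \<phi> \<psi> F = (\<Sum>U\<in>{U. child_closed F U}.
       \<phi> (induced F U) * \<psi> (induced F (nodes F - U)))"

definition delta :: "forest \<Rightarrow> 'r::comm_ring_1" where
  "delta F = (if nodes F = {} then 1 else 0)"

definition zeta :: "forest \<Rightarrow> 'r::comm_ring_1" where
  "zeta F = 1"

text \<open>Functions on isomorphism classes of rooted forests.\<close>
definition iso_invariant :: "(forest \<Rightarrow> 'r) \<Rightarrow> bool" where
  "iso_invariant \<phi> \<longleftrightarrow> (\<forall>F G. wf_forest F \<longrightarrow> wf_forest G \<longrightarrow> forest_iso F G \<longrightarrow> \<phi> F = \<phi> G)"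

definition is_moebius :: "(forest \<Rightarrow> 'r::comm_ring_1) \<Rightarrow> bool" where
  "is_moebius \<mu> \<longleftrightarrow> iso_invariant \<mu>
     \<and> (\<forall>F. wf_forest F \<longrightarrow> conv \<mu> zeta F = delta F \<and> conv zeta \<mu> F = delta F)"

end

theory Submission
  imports Defs
begin

lemma pow_alt_sum:
  assumes "finite A" "a \<in> A"
  shows "(\<Sum>U\<in>Pow A. (-1::'r::comm_ring_1) ^ card U) = 0"
proof -
  define B where "B = A - {a}"
  have A: "A = insert a B" "a \<notin> B" "finite B" using assms by (auto simp: B_def)
  have d: "Pow B \<inter> insert a ` Pow B = {}" using A(2) by auto
  have inj: "inj_on (insert a) (Pow B)" unfolding inj_on_def proof (intro ballI impI)
    fix x y assume "x \<in> Pow B" "y \<in> Pow B" "insert a x = insert a y"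
    then show "x = y" using A(2) by (metis PowD Diff_insert_absorb subsetD)
  qed
  have "(\<Sum>U\<in>Pow A. (-1::'r) ^ card U) =
        (\<Sum>U\<in>Pow B. (-1::'r) ^ card U) + (\<Sum>U\<in>insert a ` Pow B. (-1::'r) ^ card U)"
    unfolding A(1) Pow_insert using A(3) d by (simp add: sum.union_disjoint)
  also have "(\<Sum>U\<in>insert a ` Pow B. (-1::'r) ^ card U) = (\<Sum>U\<in>Pow B. (-1::'r) ^ card (insert a U))"
    using inj by (simp add: sum.reindex)
  also have "\<dots> = (\<Sum>U\<in>Pow B. - ((-1::'r) ^ card U))"
  proof (rule sum.cong)
    fix U assume "U \<in> Pow B"
    then have "finite U" "a \<notin> U" using A by (auto intro: finite_subset)
    then show "(-1::'r) ^ card (insert a U) = - ((-1::'r) ^ card U)" by simp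
  qed simp
  finally show ?thesis by (simp add: sum_negf)
qed

definition fval :: "forest \<Rightarrow> 'r::comm_ring_1" where
  "fval G = (if (\<forall>v\<in>nodes G. par G v = None) then (-1) ^ card (nodes G) else 0)"

lemma induced_wf:
  assumes "wf_forest F" "U \<subseteq> nodes F"
  shows "wf_forest (induced F U)"
proof -
  have "parent_rel (induced F U) \<subseteq> parent_rel F"
    by (auto simp: parent_rel_def induced_def par_def split: option.splits if_splits)
  then have "acyclic (parent_rel (induced F U))"
    using assms(1) acyclic_subset unfolding wf_forest_def by blast
  moreover have "finite U" using assms unfolding wf_forest_def by (auto intro: finite_subset)
  ultimately show ?thesis
    by (auto simp: wf_forest_def induced_def par_def nodes_def split: option.splits if_splits)
qed

lemma induced_all:
  assumes "wf_forest F"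
  shows "induced F (nodes F) = F"
proof -
  have "par F v = (if v \<in> nodes F then (case par F v of Some p \<Rightarrow> if p \<in> nodes F then Some p else None | None \<Rightarrow> None) else None)" for v
    using assms unfolding wf_forest_def by (cases "par F v") auto
  then have "snd (induced F (nodes F)) = par F" by (auto simp: induced_def)
  moreover have "fst (induced F (nodes F)) = nodes F" by (simp add: induced_def)
  ultimately show ?thesis unfolding par_def nodes_def by (metis prod.collapse)
qed

lemma key:
  assumes wf: "wf_forest G"
  shows "(\<Sum>U\<in>{U. child_closed G U}. (fval (induced G U) :: 'r::comm_ring_1)) = delta G"
proof -
  have fin: "finite (nodes G)" using wf unfolding wf_forest_def by blast
  define L where "L = {x\<in>nodes G. \<forall>y\<in>nodes G. par G y \<noteq> Some x}"
  have finC: "finite {U. child_closed G U}"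
    by (rule finite_subset[of _ "Pow (nodes G)"]) (use fin in \<open>auto simp: child_closed_def\<close>)
  have fv: "fval (induced G U) = (if U \<in> Pow L then (-1::'r) ^ card U else 0)"
    if cc: "child_closed G U" for U
  proof -
    have "(\<forall>v\<in>nodes (induced G U). par (induced G U) v = None) \<longleftrightarrow> U \<subseteq> L"
    proof
      assume h: "\<forall>v\<in>nodes (induced G U). par (induced G U) v = None"
      show "U \<subseteq> L"
      proof
        fix x assume x: "x \<in> U"
        have "par G y \<noteq> Some x" if "y \<in> nodes G" for y
        proof
          assume p: "par G y = Some x"
          then have "y \<in> U" using cc x that unfolding child_closed_def by blast
          with h p x show False by (auto simp: induced_def par_def nodes_def)
        qed
        then show "x \<in> L" using x cc unfolding L_def child_closed_def by auto
      qed
    next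
      assume h: "U \<subseteq> L"
      show "\<forall>v\<in>nodes (induced G U). par (induced G U) v = None"
      proof
        fix v assume v: "v \<in> nodes (induced G U)"
        show "par (induced G U) v = None"
        proof (cases "par G v")
          case (Some p)
          have "v \<in> nodes G" using Some wf unfolding wf_forest_def by auto
          then have "p \<notin> L" using Some unfolding L_def by auto
          then have "p \<notin> U" using h by auto
          then show ?thesis using Some by (simp add: induced_def par_def)
        qed (simp add: induced_def par_def)
      qed
    qed
    then show ?thesis unfolding fval_def by (simp add: induced_def nodes_def)
  qed
  have PL: "Pow L \<subseteq> {U. child_closed G U}"
    by (auto simp: L_def child_closed_def)
  have "(\<Sum>U\<in>{U. child_closed G U}. (fval (induced G U) :: 'r)) =
        (\<Sum>U\<in>{U. child_closed G U}. (if U \<in> Pow L then (-1::'r) ^ card U else 0))"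
    using fv by (intro sum.cong) auto
  also have "\<dots> = (\<Sum>U\<in>{U. child_closed G U} \<inter> Pow L. (-1::'r) ^ card U)"
    using finC by (simp add: sum.inter_restrict)
  also have "{U. child_closed G U} \<inter> Pow L = Pow L" using PL by blast
  finally have S: "(\<Sum>U\<in>{U. child_closed G U}. (fval (induced G U) :: 'r)) = (\<Sum>U\<in>Pow L. (-1::'r) ^ card U)" .
  show ?thesis
  proof (cases "nodes G = {}")
    case True
    then have "L = {}" by (simp add: L_def)
    then show ?thesis using S True by (simp add: delta_def)
  next
    case False
    have "finite (parent_rel G)"
      by (rule finite_subset[of _ "nodes G \<times> nodes G"])
         (use wf fin in \<open>auto simp: parent_rel_def wf_forest_def\<close>)
    then have "wf (parent_rel G)" using wf finite_acyclic_wf unfolding wf_forest_def by blast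
    then obtain z where z: "z \<in> nodes G" "\<forall>y. (y, z) \<in> parent_rel G \<longrightarrow> y \<notin> nodes G"
      using False wf_eq_minimal by (metis all_not_in_conv)
    then have "z \<in> L" by (auto simp: L_def parent_rel_def)
    moreover have "finite L" using fin by (simp add: L_def)
    ultimately have "(\<Sum>U\<in>Pow L. (-1::'r) ^ card U) = 0" by (simp only: pow_alt_sum[OF \<open>finite L\<close> \<open>z \<in> L\<close>])
    then show ?thesis using S False by (simp add: delta_def)
  qed
qed

lemma mu_eq:
  assumes mu: "is_moebius \<mu>"
  shows "wf_forest G \<Longrightarrow> \<mu> G = (fval G :: 'r::comm_ring_1)"
proof (induction "card (nodes G)" arbitrary: G rule: less_induct)
  case less
  have fin: "finite (nodes G)" using less.prems unfolding wf_forest_def by blast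
  define C where "C = {U. child_closed G U}"
  have finC: "finite C" unfolding C_def
    by (rule finite_subset[of _ "Pow (nodes G)"]) (use fin in \<open>auto simp: child_closed_def\<close>)
  have NC: "nodes G \<in> C" by (auto simp: C_def child_closed_def)
  have IH: "\<mu> (induced G U) = fval (induced G U)" if "U \<in> C - {nodes G}" for U
  proof -
    have sub: "U \<subseteq> nodes G" using that by (auto simp: C_def child_closed_def)
    then have "U \<subset> nodes G" using that by auto
    then have "card U < card (nodes G)" using fin by (simp add: psubset_card_mono)
    then have "card (nodes (induced G U)) < card (nodes G)" by (simp add: induced_def nodes_def)
    then show ?thesis using less.hyps induced_wf[OF less.prems sub] by blast
  qed
  have "conv \<mu> zeta G = (delta G :: 'r)" using mu less.prems unfolding is_moebius_def by blast
  then have "delta G = (\<Sum>U\<in>C. \<mu> (induced G U) :: 'r)"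
    unfolding conv_def zeta_def C_def by simp
  also have "\<dots> = \<mu> (induced G (nodes G)) + (\<Sum>U\<in>C - {nodes G}. \<mu> (induced G U))"
    using finC NC by (simp add: sum.remove)
  also have "(\<Sum>U\<in>C - {nodes G}. \<mu> (induced G U)) = (\<Sum>U\<in>C - {nodes G}. fval (induced G U))"
    using IH by simp
  finally have a: "delta G = \<mu> G + (\<Sum>U\<in>C - {nodes G}. fval (induced G U) :: 'r)"
    using induced_all[OF less.prems] by simp
  have "delta G = (\<Sum>U\<in>C. fval (induced G U) :: 'r)"
    using key[OF less.prems, where 'r='r] unfolding C_def by (rule sym)
  also have "\<dots> = fval G + (\<Sum>U\<in>C - {nodes G}. fval (induced G U))"
    using finC NC induced_all[OF less.prems] by (simp add: sum.remove)
  finally show ?case using a by simp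
qed

theorem corollary3p6:
  fixes \<mu> :: "forest \<Rightarrow> 'r::comm_ring_1" and F :: forest
  assumes "is_moebius \<mu>"
    and "wf_forest F"
  shows "\<mu> F = (if (\<forall>v\<in>nodes F. par F v = None)
                 then (-1) ^ card (nodes F) else 0)"
  using mu_eq[OF assms] unfolding fval_def .

end
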